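(* The intersection graph of any Sperner family is isomorphic to an induced subgraph of the difference graph $\mathcal{D}(G)$ for some cyclic group $G$ of squarefree order.
   Context: A Sperner family is a family $\mathcal{F}$ of subsets of a finite set $X$ such that for any two distinct $F_1,F_2\in\mathcal{F}$ we have $F_1\not\subseteq F_2$. The intersection graph of $\mathcal{F}$ has vertex set $\mathcal{F}$, two distinct members adjacent iff they intersect. For a finite group $G$ with identity $e$: the intersection power graph $\mathcal{G}_I(G)$ has vertex set $G$, two distinct non-identity vertices $x,y$ being adjacent iff $\langle x\rangle\cap\langle y\rangle\neq\{e\}$, and $e$ adjacent to every other vertex; the power graph $\mathcal{P}(G)$ has vertex set $G$, two distinct vertices adjacent iff one is a power of the other; the difference graph $\mathcal{D}(G)$ has edge set $E(\mathcal{G}_I(G))\setminus E(\mathcal{P}(G))$ on vertex set $G$, with all isolated vertices removed. *)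

theory Defs
  imports "HOL-Algebra.Elementary_Groups" "HOL-Computational_Algebra.Squarefree"
begin

definition sperner_family :: "'a set \<Rightarrow> 'a set set \<Rightarrow> bool" where
  "sperner_family X F \<longleftrightarrow> finite X \<and> (\<forall>A\<in>F. A \<subseteq> X) \<and>
     (\<forall>A\<in>F. \<forall>B\<in>F. A \<noteq> B \<longrightarrow> \<not> A \<subseteq> B)"

definition inter_graph_adj :: "'a set \<Rightarrow> 'a set \<Rightarrow> bool" where
  "inter_graph_adj A B \<longleftrightarrow> A \<noteq> B \<and> A \<inter> B \<noteq> {}"

definition ipg_adj :: "('g, 'b) monoid_scheme \<Rightarrow> 'g \<Rightarrow> 'g \<Rightarrow> bool" where
  "ipg_adj G x y \<longleftrightarrow> x \<in> carrier G \<and> y \<in> carrier G \<and> x \<noteq> y \<and>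
     (x = \<one>\<^bsub>G\<^esub> \<or> y = \<one>\<^bsub>G\<^esub> \<or>
      generate G {x} \<inter> generate G {y} \<noteq> {\<one>\<^bsub>G\<^esub>})"

definition pg_adj :: "('g, 'b) monoid_scheme \<Rightarrow> 'g \<Rightarrow> 'g \<Rightarrow> bool" where
  "pg_adj G x y \<longleftrightarrow> x \<in> carrier G \<and> y \<in> carrier G \<and> x \<noteq> y \<and>
     ((\<exists>n::nat. x = y [^]\<^bsub>G\<^esub> n) \<or> (\<exists>n::nat. y = x [^]\<^bsub>G\<^esub> n))"

definition diff_adj :: "('g, 'b) monoid_scheme \<Rightarrow> 'g \<Rightarrow> 'g \<Rightarrow> bool" where
  "diff_adj G x y \<longleftrightarrow> ipg_adj G x y \<and> \<not> pg_adj G x y"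

definition diff_vertices :: "('g, 'b) monoid_scheme \<Rightarrow> 'g set" where
  "diff_vertices G = {x \<in> carrier G. \<exists>y. diff_adj G x y}"

definition inter_graph_embeds_in_diff ::
  "'a set set \<Rightarrow> ('g, 'b) monoid_scheme \<Rightarrow> bool" where
  "inter_graph_embeds_in_diff F G \<longleftrightarrow>
     (\<exists>f. inj_on f F \<and> f ` F \<subseteq> diff_vertices G \<and>
        (\<forall>A\<in>F. \<forall>B\<in>F. inter_graph_adj A B \<longleftrightarrow> diff_adj G (f A) (f B)))"

end

theory Submission
  imports Defs
begin

declare of_nat_prod[simp del]

lemma L1:
  fixes P :: "nat set"
  assumes "finite P" "\<forall>p\<in>P. prime p" "S \<subseteq> P" "R \<subseteq> P"
    and "(\<Prod>(P - R)) dvd (\<Prod>(P - S))"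
  shows "S \<subseteq> R"
proof
  fix p assume pS: "p \<in> S"
  show "p \<in> R"
  proof (rule ccontr)
    assume "p \<notin> R"
    hence "p \<in> P - R" using pS assms by auto
    hence "p dvd \<Prod>(P - R)" using assms(1) by (intro dvd_prodI) auto
    hence "p dvd \<Prod>(P - S)" using assms(5) by (rule dvd_trans)
    moreover have "prime p" using pS assms by auto
    ultimately obtain q where q: "q \<in> P - S" "p dvd q"
      using prime_dvd_prod_iff[of "P - S" p id] assms(1) by auto
    hence "p = q" using assms \<open>prime p\<close> by (metis DiffD1 primes_dvd_imp_eq)
    thus False using q pS by auto
  qed
qed

lemma L2:
  fixes P :: "nat set"
  assumes "finite P" "\<forall>p\<in>P. prime p" "\<forall>p\<in>P. p dvd z"
  shows "(\<Prod>P) dvd z"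
  using assms
proof (induction P rule: finite_induct)
  case empty
  then show ?case by simp
next
  case (insert p Q)
  have "coprime p (\<Prod>Q)"
    using insert by (intro prod_coprime_right) (auto intro: primes_coprime)
  moreover have "(\<Prod>Q) dvd z" using insert by auto
  moreover have "p dvd z" using insert by auto
  ultimately show ?case using insert by (simp add: divides_mult)
qed

lemma L4:
  fixes P :: "nat set"
  assumes "finite P" "\<forall>p\<in>P. prime p" "S \<subseteq> P" "S \<noteq> {}"
  shows "\<Prod>(P - S) < \<Prod>P" "0 < \<Prod>(P - S)"
proof -
  have eq: "\<Prod>P = \<Prod>(P - S) * \<Prod>S"
    using prod.subset_diff[OF assms(3) assms(1)] by simp
  obtain p where p: "p \<in> S" using assms by auto
  have S0: "\<Prod>S > 0" using assms
    by (metis finite_subset not_prime_0 prod_pos bot_nat_0.not_eq_extremum subsetD)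
  have "p dvd \<Prod>S" using p assms by (intro dvd_prodI) (auto intro: finite_subset)
  hence "p \<le> \<Prod>S" using S0 by (simp add: dvd_imp_le)
  moreover have "p \<ge> 2" using p assms prime_ge_2_nat by auto
  ultimately have S2: "\<Prod>S \<ge> 2" by simp
  show "0 < \<Prod>(P - S)" using assms
    by (metis DiffD1 not_prime_0 prod_pos finite_Diff bot_nat_0.not_eq_extremum)
  thus "\<Prod>(P - S) < \<Prod>P" using eq S2 by simp
qed

lemma L3:
  fixes n d :: nat
  assumes "d dvd n" "n > 0" "d < n"
  shows "generate (integer_mod_group n) {int d} = {z. 0 \<le> z \<and> z < int n \<and> int d dvd z}"
proof -
  have c: "int d \<in> carrier (integer_mod_group n)"
    using assms by (simp add: carrier_integer_mod_group)
  have dn: "int d dvd int n" using assms by simp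
  have "generate (integer_mod_group n) {int d} = {int d [^]\<^bsub>integer_mod_group n\<^esub> (k::int) | k. k \<in> UNIV}"
    using group.generate_pow[OF group_integer_mod_group c] .
  also have "\<dots> = {(k * int d) mod int n | k. k \<in> UNIV}"
    by (simp add: int_pow_integer_mod_group)
  also have "\<dots> = {z. 0 \<le> z \<and> z < int n \<and> int d dvd z}"
  proof (intro equalityI subsetI)
    fix z assume "z \<in> {(k * int d) mod int n | k. k \<in> UNIV}"
    then obtain k where z: "z = (k * int d) mod int n" by auto
    thus "z \<in> {z. 0 \<le> z \<and> z < int n \<and> int d dvd z}"
      using assms dn by (auto simp: dvd_mod_iff)
  next
    fix z assume "z \<in> {z. 0 \<le> z \<and> z < int n \<and> int d dvd z}"
    then obtain j where "z = int d * j" "0 \<le> z" "z < int n" by auto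
    thus "z \<in> {(k * int d) mod int n | k. k \<in> UNIV}"
      by (intro CollectI exI[of _ j]) (auto simp: mult.commute)
  qed
  finally show ?thesis .
qed

lemma powlem:
  fixes P :: "nat set"
  assumes P: "finite P" "\<forall>p\<in>P. prime p" and S: "S \<subseteq> P" "S \<noteq> {}"
    and R: "R \<subseteq> P" "R \<noteq> {}"
  shows "(\<exists>m::nat. int (\<Prod>(P-S)) = int (\<Prod>(P-R)) [^]\<^bsub>integer_mod_group (\<Prod>P)\<^esub> m) \<longleftrightarrow> S \<subseteq> R"
proof
  assume "\<exists>m::nat. int (\<Prod>(P-S)) = int (\<Prod>(P-R)) [^]\<^bsub>integer_mod_group (\<Prod>P)\<^esub> m"
  then obtain m :: nat where m: "int (\<Prod>(P-S)) = (int m * int (\<Prod>(P-R))) mod int (\<Prod>P)"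
    by auto
  have "\<Prod>(P-R) dvd \<Prod>P" using P by (intro prod_dvd_prod_subset) auto
  hence "int (\<Prod>(P-R)) dvd int (\<Prod>P)" by simp
  hence "int (\<Prod>(P-R)) dvd int (\<Prod>(P-S))" unfolding m by (simp add: dvd_mod_iff)
  hence "\<Prod>(P-R) dvd \<Prod>(P-S)" by simp
  thus "S \<subseteq> R" using L1 P S R by blast
next
  assume "S \<subseteq> R"
  hence d: "\<Prod>(P-R) dvd \<Prod>(P-S)" using P by (intro prod_dvd_prod_subset) auto
  then obtain m where m: "\<Prod>(P-S) = \<Prod>(P-R) * m" by auto
  have "\<Prod>(P-S) < \<Prod>P" using L4 P S by blast
  hence "int (\<Prod>(P-S)) = (int m * int (\<Prod>(P-R))) mod int (\<Prod>P)"
    using m by (metis mod_less of_nat_less_iff of_nat_mult zmod_int mult.commute)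
  thus "\<exists>m::nat. int (\<Prod>(P-S)) = int (\<Prod>(P-R)) [^]\<^bsub>integer_mod_group (\<Prod>P)\<^esub> m"
    by auto
qed

lemma interlem:
  fixes P :: "nat set"
  assumes P: "finite P" "\<forall>p\<in>P. prime p" and S: "S \<subseteq> P" "S \<noteq> {}"
    and R: "R \<subseteq> P" "R \<noteq> {}"
  shows "generate (integer_mod_group (\<Prod>P)) {int (\<Prod>(P-S))} \<inter>
         generate (integer_mod_group (\<Prod>P)) {int (\<Prod>(P-R))} \<noteq> {0} \<longleftrightarrow> S \<inter> R \<noteq> {}"
proof -
  have n0: "\<Prod>P > 0" using P by (metis not_prime_0 prod_pos bot_nat_0.not_eq_extremum)
  have gS: "generate (integer_mod_group (\<Prod>P)) {int (\<Prod>(P-S))} = {z. 0 \<le> z \<and> z < int (\<Prod>P) \<and> int (\<Prod>(P-S)) dvd z}"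
    using P S n0 L4 by (intro L3 prod_dvd_prod_subset) auto
  have gR: "generate (integer_mod_group (\<Prod>P)) {int (\<Prod>(P-R))} = {z. 0 \<le> z \<and> z < int (\<Prod>P) \<and> int (\<Prod>(P-R)) dvd z}"
    using P R n0 L4 by (intro L3 prod_dvd_prod_subset) auto
  show ?thesis
  proof
    assume H: "generate (integer_mod_group (\<Prod>P)) {int (\<Prod>(P-S))} \<inter>
         generate (integer_mod_group (\<Prod>P)) {int (\<Prod>(P-R))} \<noteq> {0}"
    show "S \<inter> R \<noteq> {}"
    proof
      assume SR: "S \<inter> R = {}"
      have "{z. 0 \<le> z \<and> z < int (\<Prod>P) \<and> int (\<Prod>(P-S)) dvd z} \<inter>
            {z. 0 \<le> z \<and> z < int (\<Prod>P) \<and> int (\<Prod>(P-R)) dvd z} = {0}"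
      proof (intro equalityI subsetI)
        fix z assume z: "z \<in> {z. 0 \<le> z \<and> z < int (\<Prod>P) \<and> int (\<Prod>(P-S)) dvd z} \<inter>
            {z. 0 \<le> z \<and> z < int (\<Prod>P) \<and> int (\<Prod>(P-R)) dvd z}"
        define w where "w = nat z"
        have zw: "z = int w" using z w_def by auto
        have a: "\<Prod>(P-S) dvd w" "\<Prod>(P-R) dvd w" "w < \<Prod>P" using z zw by auto
        have "\<forall>p\<in>P. p dvd w"
        proof
          fix p assume p: "p \<in> P"
          have "p \<in> P - S \<or> p \<in> P - R" using p SR by auto
          thus "p dvd w"
          proof
            assume "p \<in> P - S"
            hence "p dvd \<Prod>(P-S)" using P by (intro dvd_prodI) auto
            thus ?thesis using a dvd_trans by blast
          next
            assume "p \<in> P - R"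
            hence "p dvd \<Prod>(P-R)" using P by (intro dvd_prodI) auto
            thus ?thesis using a dvd_trans by blast
          qed
        qed
        hence "\<Prod>P dvd w" using L2 P by blast
        hence "w = 0" using a by (metis dvd_imp_le not_less bot_nat_0.not_eq_extremum)
        thus "z \<in> {0}" using zw by simp
      qed (use n0 in auto)
      thus False using H gS gR by simp
    qed
  next
    assume "S \<inter> R \<noteq> {}"
    have sub: "S \<inter> R \<subseteq> P" "S \<inter> R \<noteq> {}" using S \<open>S \<inter> R \<noteq> {}\<close> by auto
    have lt: "\<Prod>(P - S \<inter> R) < \<Prod>P" "0 < \<Prod>(P - S \<inter> R)" using L4[OF P sub] by auto
    have d1: "\<Prod>(P-S) dvd \<Prod>(P - S \<inter> R)" using P by (intro prod_dvd_prod_subset) auto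
    have d2: "\<Prod>(P-R) dvd \<Prod>(P - S \<inter> R)" using P by (intro prod_dvd_prod_subset) auto
    have "int (\<Prod>(P - S \<inter> R)) \<in> {z. 0 \<le> z \<and> z < int (\<Prod>P) \<and> int (\<Prod>(P-S)) dvd z} \<inter>
            {z. 0 \<le> z \<and> z < int (\<Prod>P) \<and> int (\<Prod>(P-R)) dvd z}"
      using lt d1 d2 by auto
    moreover have "int (\<Prod>(P - S \<inter> R)) \<noteq> 0" using lt by simp
    ultimately show "generate (integer_mod_group (\<Prod>P)) {int (\<Prod>(P-S))} \<inter>
         generate (integer_mod_group (\<Prod>P)) {int (\<Prod>(P-R))} \<noteq> {0}"
      using gS gR by blast
  qed
qed

lemma key:
  fixes P :: "nat set"
  assumes P: "finite P" "\<forall>p\<in>P. prime p" and S: "S \<subseteq> P" "S \<noteq> {}"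
    and R: "R \<subseteq> P" "R \<noteq> {}"
  shows "diff_adj (integer_mod_group (\<Prod>P)) (int (\<Prod>(P-S))) (int (\<Prod>(P-R)))
         \<longleftrightarrow> (S \<inter> R \<noteq> {} \<and> \<not> S \<subseteq> R \<and> \<not> R \<subseteq> S)"
proof -
  have n0: "\<Prod>P > 0" using P by (metis not_prime_0 prod_pos bot_nat_0.not_eq_extremum)
  have cS: "int (\<Prod>(P-S)) \<in> carrier (integer_mod_group (\<Prod>P))" "int (\<Prod>(P-S)) \<noteq> 0"
    using L4[OF P S] n0 by (auto simp: carrier_integer_mod_group)
  have cR: "int (\<Prod>(P-R)) \<in> carrier (integer_mod_group (\<Prod>P))" "int (\<Prod>(P-R)) \<noteq> 0"
    using L4[OF P R] n0 by (auto simp: carrier_integer_mod_group)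
  have neq: "int (\<Prod>(P-S)) = int (\<Prod>(P-R)) \<longleftrightarrow> S = R"
  proof
    assume "int (\<Prod>(P-S)) = int (\<Prod>(P-R))"
    hence e: "\<Prod>(P-S) = \<Prod>(P-R)" by simp
    show "S = R" using L1[OF P S(1) R(1)] L1[OF P R(1) S(1)] e by auto
  qed simp
  have I: "generate (integer_mod_group (\<Prod>P)) {int (\<Prod>(P-S))} \<inter>
         generate (integer_mod_group (\<Prod>P)) {int (\<Prod>(P-R))} \<noteq> {0} \<longleftrightarrow> S \<inter> R \<noteq> {}"
    using interlem[OF P S R] .
  have p1: "(\<exists>m::nat. int (\<Prod>(P-S)) = int (\<Prod>(P-R)) [^]\<^bsub>integer_mod_group (\<Prod>P)\<^esub> m) \<longleftrightarrow> S \<subseteq> R"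
    using powlem[OF P S R] .
  have p2: "(\<exists>m::nat. int (\<Prod>(P-R)) = int (\<Prod>(P-S)) [^]\<^bsub>integer_mod_group (\<Prod>P)\<^esub> m) \<longleftrightarrow> R \<subseteq> S"
    using powlem[OF P R S] .
  show ?thesis
    unfolding diff_adj_def ipg_adj_def pg_adj_def one_integer_mod_group
    using cS cR neq I p1 p2 by auto
qed

lemma groupprops:
  assumes "n > 0"
  shows "cyclic_group (integer_mod_group n)" "finite (carrier (integer_mod_group n))"
        "order (integer_mod_group n) = n"
proof -
  show "finite (carrier (integer_mod_group n))" using assms by (simp add: carrier_integer_mod_group)
  show "order (integer_mod_group n) = n" using assms by (simp add: order_def carrier_integer_mod_group)
  show "cyclic_group (integer_mod_group n)"
  proof (cases "n = 1")
    case True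
    thus ?thesis by (simp add: trivial_imp_cyclic_group trivial_integer_mod_group)
  next
    case False
    have c1: "(1::int) \<in> carrier (integer_mod_group n)" using False by simp
    have "carrier (integer_mod_group n) = range (\<lambda>k::int. 1 [^]\<^bsub>integer_mod_group n\<^esub> k)"
    proof (intro equalityI subsetI)
      fix z assume "z \<in> carrier (integer_mod_group n)"
      hence "z = z mod int n" using assms by (simp add: carrier_integer_mod_group)
      thus "z \<in> range (\<lambda>k::int. 1 [^]\<^bsub>integer_mod_group n\<^esub> k)"
        by (simp add: int_pow_integer_mod_group)
    next
      fix z assume "z \<in> range (\<lambda>k::int. 1 [^]\<^bsub>integer_mod_group n\<^esub> k)"
      then obtain k where "z = k mod int n" by (auto simp: int_pow_integer_mod_group)
      thus "z \<in> carrier (integer_mod_group n)" using assms by (simp add: carrier_integer_mod_group)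
    qed
    thus ?thesis using c1 group.cyclic_group[OF group_integer_mod_group] by blast
  qed
qed

theorem proposition3p10:
  fixes X :: "'a set" and F :: "'a set set"
  assumes "sperner_family X F"
  shows "\<exists>G :: int monoid. group G \<and> cyclic_group G \<and> finite (carrier G) \<and>
           squarefree (order G) \<and> inter_graph_embeds_in_diff F G"
proof -
  have fX: "finite X" and FX: "\<forall>A\<in>F. A \<subseteq> X" using assms by (auto simp: sperner_family_def)
  have fF: "finite F" using fX FX by (meson PowI finite_Pow_iff finite_subset subsetI)
  define T :: "('a + 'a set \<times> nat) set" where "T = Inl ` X \<union> Inr ` (F \<times> {0,1,2})"
  have fT: "finite T" unfolding T_def using fX fF by auto
  obtain Q where Q: "Q \<subseteq> {p::nat. prime p}" "finite Q" "card Q = card T"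
    using infinite_arbitrarily_large[OF primes_infinite] by blast
  obtain \<pi> where bij: "bij_betw \<pi> T Q" using finite_same_card_bij[OF fT Q(2)] Q(3) by metis
  have inj: "inj_on \<pi> T" and imT: "\<pi> ` T = Q" using bij by (auto simp: bij_betw_def)
  have Pp: "\<forall>p\<in>Q. prime p" using Q by auto
  define SA where "SA A = (Inl ` A \<union> {Inr (A,0), Inr (A,1)} :: ('a + 'a set \<times> nat) set)" for A :: "'a set"
  define YA where "YA A = ({Inr (A,1), Inr (A,2)} :: ('a + 'a set \<times> nat) set)" for A :: "'a set"
  have SAT: "SA A \<subseteq> T" if "A \<in> F" for A using that FX by (auto simp: SA_def T_def)
  have YAT: "YA A \<subseteq> T" if "A \<in> F" for A using that by (auto simp: YA_def T_def)
  define n where "n = \<Prod>Q"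
  define G where "G = integer_mod_group n"
  define f where "f A = int (\<Prod>(Q - \<pi> ` SA A))" for A
  define g where "g A = int (\<Prod>(Q - \<pi> ` YA A))" for A
  have n0: "n > 0" unfolding n_def using Q by (metis not_prime_0 prod_pos bot_nat_0.not_eq_extremum mem_Collect_eq subsetD)
  have sub: "\<pi> ` SA A \<subseteq> Q" "\<pi> ` SA A \<noteq> {}" "\<pi> ` YA A \<subseteq> Q" "\<pi> ` YA A \<noteq> {}" if "A \<in> F" for A
    using SAT[OF that] YAT[OF that] imT by (auto simp: SA_def YA_def)
  have mem: "\<pi> a \<in> \<pi> ` B \<longleftrightarrow> a \<in> B" if "a \<in> T" "B \<subseteq> T" for a B
    using inj_on_image_mem_iff[OF inj that] .
  have inT: "Inr (A, i) \<in> T" if "A \<in> F" "i \<in> {0,1,2}" for A i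
    using that by (auto simp: T_def)
  have keyA: "diff_adj G (f A) (g A)" if A: "A \<in> F" for A
  proof -
    have "\<pi> ` SA A \<inter> \<pi> ` YA A \<noteq> {}"
      using A by (auto simp: SA_def YA_def)
    moreover have "\<not> \<pi> ` SA A \<subseteq> \<pi> ` YA A"
    proof
      assume "\<pi> ` SA A \<subseteq> \<pi> ` YA A"
      hence "\<pi> (Inr (A,0)) \<in> \<pi> ` YA A" by (auto simp: SA_def)
      hence "Inr (A,0) \<in> YA A" using mem[OF inT[OF A] YAT[OF A]] by simp
      thus False by (simp add: YA_def)
    qed
    moreover have "\<not> \<pi> ` YA A \<subseteq> \<pi> ` SA A"
    proof
      assume "\<pi> ` YA A \<subseteq> \<pi> ` SA A"
      hence "\<pi> (Inr (A,2)) \<in> \<pi> ` SA A" by (auto simp: YA_def)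
      hence "Inr (A,2) \<in> SA A" using mem[OF inT[OF A] SAT[OF A]] by simp
      thus False by (auto simp: SA_def)
    qed
    ultimately show ?thesis
      unfolding G_def n_def f_def g_def using key[OF Q(2) Pp sub(1,2)[OF A] sub(3,4)[OF A]] by blast
  qed
  have notsub: "\<not> \<pi> ` SA A \<subseteq> \<pi> ` SA B" if "A \<in> F" "B \<in> F" "A \<noteq> B" for A B
  proof
    assume "\<pi> ` SA A \<subseteq> \<pi> ` SA B"
    hence "\<pi> (Inr (A,0)) \<in> \<pi> ` SA B" by (auto simp: SA_def)
    hence "Inr (A,0) \<in> SA B" using mem[OF inT[OF that(1)] SAT[OF that(2)]] by simp
    thus False using that by (auto simp: SA_def)
  qed
  have interAB: "\<pi> ` SA A \<inter> \<pi> ` SA B \<noteq> {} \<longleftrightarrow> A \<inter> B \<noteq> {}" if "A \<in> F" "B \<in> F" "A \<noteq> B" for A B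
  proof -
    have "\<pi> ` SA A \<inter> \<pi> ` SA B = \<pi> ` (SA A \<inter> SA B)"
      using inj_on_image_Int[OF inj SAT[OF that(1)] SAT[OF that(2)]] by simp
    moreover have "SA A \<inter> SA B = Inl ` (A \<inter> B)" using that by (auto simp: SA_def)
    ultimately show ?thesis by auto
  qed
  have adj: "inter_graph_adj A B \<longleftrightarrow> diff_adj G (f A) (f B)" if "A \<in> F" "B \<in> F" for A B
  proof (cases "A = B")
    case True
    thus ?thesis by (simp add: inter_graph_adj_def diff_adj_def ipg_adj_def)
  next
    case False
    have "diff_adj G (f A) (f B) \<longleftrightarrow> (\<pi> ` SA A \<inter> \<pi> ` SA B \<noteq> {} \<and> \<not> \<pi> ` SA A \<subseteq> \<pi> ` SA B \<and> \<not> \<pi> ` SA B \<subseteq> \<pi> ` SA A)"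
      unfolding G_def n_def f_def using key[OF Q(2) Pp sub(1,2)[OF that(1)] sub(1,2)[OF that(2)]] by blast
    thus ?thesis using notsub[OF that False] notsub[OF that(2,1)] False interAB[OF that False]
      by (auto simp: inter_graph_adj_def)
  qed
  have injf: "inj_on f F"
  proof
    fix A B assume AB: "A \<in> F" "B \<in> F" "f A = f B"
    show "A = B"
    proof (rule ccontr)
      assume ne: "A \<noteq> B"
      have "\<Prod>(Q - \<pi> ` SA A) = \<Prod>(Q - \<pi> ` SA B)" using AB(3) by (simp add: f_def)
      hence "\<Prod>(Q - \<pi> ` SA A) dvd \<Prod>(Q - \<pi> ` SA B)" by simp
      hence "\<pi> ` SA B \<subseteq> \<pi> ` SA A" using L1[OF Q(2) Pp sub(1)[OF AB(2)] sub(1)[OF AB(1)]] by blast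
      thus False using notsub[OF AB(2) AB(1)] ne by auto
    qed
  qed
  have fV: "f ` F \<subseteq> diff_vertices G"
  proof
    fix x assume "x \<in> f ` F"
    then obtain A where A: "A \<in> F" "x = f A" by auto
    have "f A \<in> carrier G"
      using L4[OF Q(2) Pp sub(1,2)[OF A(1)]] by (simp add: G_def f_def n_def carrier_integer_mod_group)
    thus "x \<in> diff_vertices G" using keyA[OF A(1)] A(2) by (auto simp: diff_vertices_def)
  qed
  have sq: "squarefree n" unfolding n_def
    using squarefree_prod_coprime[of Q "\<lambda>x. x"] Pp
    by (metis primes_coprime squarefree_prime)
  have "group G" by (simp add: G_def)
  moreover note groupprops[OF n0]
  ultimately show ?thesis
    using sq injf fV adj unfolding inter_graph_embeds_in_diff_def G_def
    by (intro exI[of _ "integer_mod_group n"]) metis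
qed

end
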